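(* Let $n\ge2$, $C>0$, $x\in\mathcal{K}_S$, and $\tilde{x}=x+\eta$ where $\eta$ has i.i.d. Laplace entries with mean $0$ and scale $b>0$ (density $\prod_i\frac{1}{2b}e^{-|\eta_i|/b}$). Let $f$ denote the probability density of $\pi_S(\tilde{x})$ with respect to the $(n-1)$-dimensional Lebesgue measure on the hyperplane $\mathcal{K}_S$. Then for every pair $(i,j)$ and every $y\in\mathcal{K}_S$ with $x_i\le x_j$ and $y_i\le y_j$, $$f(y)\ge f(\mathrm{sw}_{ij}(y)).$$
   Context: $\mathcal{K}_S=\{v\in\mathbb{R}^n:\sum_iv_i=C\}$ and $\pi_S$ is the Euclidean projection onto $\mathcal{K}_S$. $\mathrm{sw}_{ij}(y)$ is the vector obtained from $y$ by swapping its $i$-th and $j$-th entries. *)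

theory Defs
  imports "HOL-Analysis.Analysis"
begin

definition K_S :: "real \<Rightarrow> (real ^ 'n) set" where
  "K_S C = {v. (\<Sum>i\<in>UNIV. v $ i) = C}"

definition proj_S :: "real \<Rightarrow> real ^ 'n \<Rightarrow> real ^ 'n" where
  "proj_S C v = (\<chi> k. v $ k - ((\<Sum>i\<in>UNIV. v $ i) - C) / real CARD('n))"

definition sw :: "'n \<Rightarrow> 'n \<Rightarrow> real ^ 'n \<Rightarrow> real ^ 'n" where
  "sw i j y = (\<chi> k. if k = i then y $ j else if k = j then y $ i else y $ k)"

text \<open>The (n-1)-dimensional Lebesgue (surface) measure on the hyperplane K_S:
  the measure of A is the n-dimensional volume of the set of points at signed distance
  in [0,1] from K_S (along the unit normal (1,...,1)/sqrt n) whose projection lies in A,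
  i.e. the volume of the unit-height right cylinder over A.\<close>
definition hyperplane_measure :: "real \<Rightarrow> (real ^ 'n) measure" where
  "hyperplane_measure C =
     distr (restrict_space lborel
              {z :: real ^ 'n. C \<le> (\<Sum>i\<in>UNIV. z $ i) \<and> (\<Sum>i\<in>UNIV. z $ i) \<le> C + sqrt (real CARD('n))})
           borel (proj_S C)"

definition laplace_density :: "real \<Rightarrow> real ^ 'n \<Rightarrow> real ^ 'n \<Rightarrow> real" where
  "laplace_density b x z = (\<Prod>i\<in>UNIV. exp (- \<bar>z $ i - x $ i\<bar> / b) / (2 * b))"

definition noisy_law :: "real \<Rightarrow> real ^ 'n \<Rightarrow> (real ^ 'n) measure" where
  "noisy_law b x = density lborel (\<lambda>z. ennreal (laplace_density b x z))"

definition is_proj_density :: "real \<Rightarrow> real \<Rightarrow> real ^ 'n \<Rightarrow> (real ^ 'n \<Rightarrow> real) \<Rightarrow> bool" where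
  "is_proj_density C b x f \<longleftrightarrow>
     f \<in> borel_measurable borel \<and> (\<forall>y. 0 \<le> f y) \<and>
     distr (noisy_law b x) borel (proj_S C) = density (hyperplane_measure C) (\<lambda>y. ennreal (f y))"

end

theory Submission
  imports Defs
begin

definition onev :: "real ^ 'n" where "onev = (\<chi> k. 1)"

lemma sum_plus_onev: fixes z :: "real^'n" shows "(\<Sum>i\<in>UNIV. (z + t *\<^sub>R onev) $ i) = (\<Sum>i\<in>UNIV. z $ i) + real CARD('n) * t"
  by (simp add: onev_def sum.distrib)

lemma proj_eq: fixes z :: "real^'n" shows "proj_S C z = z - (((\<Sum>i\<in>UNIV. z $ i) - C) / real CARD('n)) *\<^sub>R onev"
  by (simp add: proj_S_def onev_def vec_eq_iff)

lemma proj_shift: "proj_S C (z + t *\<^sub>R onev) = proj_S C (z::real^'n)"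
  unfolding proj_eq sum_plus_onev by (simp add: vec_eq_iff onev_def field_simps)

lemma proj_in_K: "proj_S C (z::real^'n) \<in> K_S C"
  by (simp add: K_S_def proj_S_def sum_subtractf)

lemma proj_decomp: fixes z :: "real^'n" shows "z = proj_S C z + (((\<Sum>i\<in>UNIV. z $ i) - C) / real CARD('n)) *\<^sub>R (onev::real^'n)"
  by (simp add: proj_eq)

lemma proj_K: fixes y :: "real^'n" assumes "y \<in> K_S C" shows "proj_S C y = y"
  using assms by (simp add: proj_eq K_S_def)

lemma cont_sum: "continuous_on UNIV (\<lambda>z::real^'n. \<Sum>i\<in>UNIV. z $ i)"
  by (intro continuous_intros)

lemma cont_proj: "continuous_on UNIV (proj_S C :: real^'n \<Rightarrow> _)"
  proof -
  have "proj_S C = (\<lambda>z::real^'n. z - (((\<Sum>i\<in>UNIV. z $ i) - C) / real CARD('n)) *\<^sub>R onev)"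
    by (rule ext, rule proj_eq)
  then show ?thesis by (simp, intro continuous_intros) auto
qed

lemma meas_proj[measurable]: "proj_S C \<in> borel_measurable (borel :: (real^'n) measure)"
  by (rule borel_measurable_continuous_onI[OF cont_proj])

lemma cont_lap: "continuous_on UNIV (laplace_density b x :: real^'n \<Rightarrow> real)"
proof -
  have "laplace_density b x = (\<lambda>z::real^'n. \<Prod>i\<in>UNIV. exp (- \<bar>z $ i - x $ i\<bar> * inverse b) * inverse (2 * b))"
    unfolding laplace_density_def divide_inverse ..
  then show ?thesis by (simp only:) (intro continuous_intros)
qed

lemma meas_lap[measurable]: "laplace_density b x \<in> borel_measurable (borel :: (real^'n) measure)"
  by (rule borel_measurable_continuous_onI[OF cont_lap])

lemma lap_nonneg: "b > 0 \<Longrightarrow> 0 \<le> laplace_density b x z"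
  unfolding laplace_density_def by (intro prod_nonneg) auto


lemma exp_half_nn:
  fixes b :: real assumes "b > 0"
  shows "(\<integral>\<^sup>+t. ennreal (if 0 \<le> t then exp (- (1/b) * t) else 0) \<partial>lborel) = ennreal b"
proof -
  have "((\<lambda>t::real. exp (- (1/b) * t)) has_integral exp (- (1/b) * 0) / (1/b)) {0..}"
    by (rule has_integral_exp_minus_to_infinity) (use assms in simp)
  then have "((\<lambda>t::real. if t \<in> {0..} then exp (- (1/b) * t) else 0) has_integral b) UNIV"
    by (subst has_integral_restrict_UNIV) simp
  then have "integral\<^sup>N lborel (\<lambda>t::real. if t \<in> {0..} then exp (- (1/b) * t) else 0) = b"
    by (intro nn_integral_has_integral_lborel) auto
  then show ?thesis by simp
qed

lemma expabs_nn_fin: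
  fixes b :: real assumes "b > 0"
  shows "(\<integral>\<^sup>+t. ennreal (exp (- \<bar>t\<bar> / b)) \<partial>lborel) < \<infinity>"
proof -
  define h where "h = (\<lambda>t::real. ennreal (if 0 \<le> t then exp (- (1/b) * t) else 0))"
  have hm[measurable]: "h \<in> borel_measurable borel" unfolding h_def by measurable
  have h1: "integral\<^sup>N lborel h = ennreal b" unfolding h_def by (rule exp_half_nn[OF assms])
  have h2: "(\<integral>\<^sup>+t. h (- t) \<partial>lborel) = ennreal b"
    using nn_integral_real_affine[OF hm, of "-1" 0] h1 by simp
  have "(\<integral>\<^sup>+t. ennreal (exp (- \<bar>t\<bar> / b)) \<partial>lborel) \<le> (\<integral>\<^sup>+t. h t + h (- t) \<partial>lborel)"
    by (intro nn_integral_mono) (auto simp: h_def)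
  also have "\<dots> = ennreal b + ennreal b"
    by (subst nn_integral_add) (auto simp: h1 h2)
  finally show ?thesis by (simp add: order_le_less_trans ennreal_plus[symmetric] del: ennreal_plus)
qed

lemma expabs_integrable:
  fixes b :: real assumes "b > 0"
  shows "integrable lborel (\<lambda>t::real. exp (- \<bar>a + t\<bar> / b))"
proof -
  have "integrable lborel (\<lambda>t::real. exp (- \<bar>t\<bar> / b))"
    using expabs_nn_fin[OF assms] by (intro integrableI_nonneg) auto
  from lborel_integrable_real_affine[OF this, of 1 a] show ?thesis by simp
qed

lemma expabs_integral:
  fixes b :: real assumes "b > 0"
  shows "(\<integral>t. exp (- \<bar>a + t\<bar> / b) \<partial>lborel) = (\<integral>t. exp (- \<bar>t\<bar> / b) \<partial>lborel)"
  using lborel_integral_real_affine[of 1 "\<lambda>t. exp (- \<bar>t\<bar> / b)" a] by simp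


definition lapB :: "real \<Rightarrow> 'n itself \<Rightarrow> real" where
  "lapB b _ = (1/(2*b)) * (1/(2*b)) ^ (CARD('n) - 1)"

lemma lap_bound:
  fixes x z :: "real^'n" assumes b: "b > 0"
  shows "laplace_density b x z \<le> lapB b TYPE('n) * exp (- \<bar>z $ i - x $ i\<bar> / b)"
proof -
  have "laplace_density b x z = exp (- \<bar>z $ i - x $ i\<bar> / b) / (2 * b) *
      (\<Prod>k\<in>UNIV - {i}. exp (- \<bar>z $ k - x $ k\<bar> / b) / (2 * b))"
    unfolding laplace_density_def by (subst prod.remove[of _ i]) auto
  also have "(\<Prod>k\<in>UNIV - {i}. exp (- \<bar>z $ k - x $ k\<bar> / b) / (2 * b)) \<le> (\<Prod>k\<in>UNIV - {i}. 1 / (2 * b))"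
    using b by (intro prod_mono) (auto simp: divide_right_mono)
  also have "(\<Prod>k\<in>UNIV - {i}. 1 / (2 * b)) = (1/(2*b)) ^ (CARD('n) - 1)"
    by (simp add: card_Diff_singleton)
  finally show ?thesis using b unfolding lapB_def
    by (simp add: mult_left_mono divide_right_mono field_simps)
qed

lemma lapB_pos: "b > 0 \<Longrightarrow> lapB b TYPE('n) > 0"
  unfolding lapB_def by simp

lemma lap_line_integrable:
  fixes x y :: "real^'n" assumes b: "b > 0"
  shows "integrable lborel (\<lambda>t. laplace_density b x (y + t *\<^sub>R onev))"
proof (rule Bochner_Integration.integrable_bound)
  fix i :: 'n
  show "integrable lborel (\<lambda>t. lapB b TYPE('n) * exp (- \<bar>(y $ i - x $ i) + t\<bar> / b))"
    using expabs_integrable[OF b] by simp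
  show "AE t in lborel. norm (laplace_density b x (y + t *\<^sub>R onev)) \<le>
      norm (lapB b TYPE('n) * exp (- \<bar>(y $ i - x $ i) + t\<bar> / b))"
  proof (intro AE_I2)
    fix t
    have p: "0 < lapB b TYPE('n)" by (rule lapB_pos[OF b])
    have "laplace_density b x (y + t *\<^sub>R onev) \<le> lapB b TYPE('n) * exp (- \<bar>(y + t *\<^sub>R onev) $ i - x $ i\<bar> / b)"
      by (rule lap_bound[OF b])
    also have "(y + t *\<^sub>R onev) $ i - x $ i = (y $ i - x $ i) + t" by (simp add: onev_def)
    finally show "norm (laplace_density b x (y + t *\<^sub>R onev)) \<le>
      norm (lapB b TYPE('n) * exp (- \<bar>(y $ i - x $ i) + t\<bar> / b))"
      using p lap_nonneg[OF b, of x "y + t *\<^sub>R onev"] by simp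
  qed
qed measurable


definition Fd :: "real \<Rightarrow> real^'n \<Rightarrow> real^'n \<Rightarrow> real" where
  "Fd b x y = sqrt (real CARD('n)) * (\<integral>t. laplace_density b x (y + t *\<^sub>R onev) \<partial>lborel)"

lemma Fd_nonneg: fixes x y :: "real^'n" shows "b > 0 \<Longrightarrow> 0 \<le> Fd b x y"
  unfolding Fd_def by (intro mult_nonneg_nonneg Bochner_Integration.integral_nonneg lap_nonneg) auto

lemma Fd_nn:
  fixes x y :: "real^'n" assumes b: "b > 0"
  shows "ennreal (Fd b x y) = ennreal (sqrt (real CARD('n))) * (\<integral>\<^sup>+t. ennreal (laplace_density b x (y + t *\<^sub>R onev)) \<partial>lborel)"
proof -
  have "0 \<le> (\<integral>t. laplace_density b x (y + t *\<^sub>R onev) \<partial>lborel)"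
    by (intro Bochner_Integration.integral_nonneg lap_nonneg[OF b])
  then show ?thesis unfolding Fd_def
  by (subst nn_integral_eq_integral[OF lap_line_integrable[OF b]])
     (auto intro: lap_nonneg[OF b] simp: ennreal_mult)
qed

lemma Fd_bound:
  fixes x y :: "real^'n" assumes b: "b > 0"
  shows "Fd b x y \<le> sqrt (real CARD('n)) * (lapB b TYPE('n) * (\<integral>t. exp (- \<bar>t\<bar> / b) \<partial>lborel))"
proof -
  define i :: 'n where "i = undefined"
  have "(\<integral>t. laplace_density b x (y + t *\<^sub>R onev) \<partial>lborel) \<le>
        (\<integral>t. lapB b TYPE('n) * exp (- \<bar>(y $ i - x $ i) + t\<bar> / b) \<partial>lborel)"
  proof (rule integral_mono[OF lap_line_integrable[OF b]])
    show "integrable lborel (\<lambda>t. lapB b TYPE('n) * exp (- \<bar>(y $ i - x $ i) + t\<bar> / b))"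
      using expabs_integrable[OF b] by simp
    fix t
    have "laplace_density b x (y + t *\<^sub>R onev) \<le> lapB b TYPE('n) * exp (- \<bar>(y + t *\<^sub>R onev) $ i - x $ i\<bar> / b)"
      by (rule lap_bound[OF b])
    also have "(y + t *\<^sub>R onev) $ i - x $ i = (y $ i - x $ i) + t" by (simp add: onev_def)
    finally show "laplace_density b x (y + t *\<^sub>R onev) \<le> lapB b TYPE('n) * exp (- \<bar>(y $ i - x $ i) + t\<bar> / b)" .
  qed
  also have "\<dots> = lapB b TYPE('n) * (\<integral>t. exp (- \<bar>t\<bar> / b) \<partial>lborel)"
    using expabs_integral[OF b] by simp
  finally show ?thesis unfolding Fd_def by (intro mult_left_mono) auto
qed

lemma Fd_isCont:
  fixes x y :: "real^'n" assumes b: "b > 0"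
  shows "isCont (Fd b x) y"
proof (subst continuous_at_sequentially, intro allI impI)
  fix X :: "nat \<Rightarrow> real^'n" assume X: "X \<longlonglongrightarrow> y"
  define i :: 'n where "i = undefined"
  have "Bseq (\<lambda>n. X n - y)" using X by (intro convergent_imp_Bseq convergentI[OF LIM_zero[OF X]])
  then obtain R where R: "R > 0" "\<And>n. norm (X n - y) \<le> R" by (auto simp: Bseq_def)
  have Ri: "\<bar>X n $ i - y $ i\<bar> \<le> R" for n
    using component_le_norm_cart[of "X n - y" i] R(2)[of n] by simp
  define w where "w = (\<lambda>t. lapB b TYPE('n) * exp (R / b) * exp (- \<bar>(y $ i - x $ i) + t\<bar> / b))"
  have "(\<lambda>n. \<integral>t. laplace_density b x (X n + t *\<^sub>R onev) \<partial>lborel) \<longlonglongrightarrow>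
        (\<integral>t. laplace_density b x (y + t *\<^sub>R onev) \<partial>lborel)"
  proof (rule integral_dominated_convergence[where w = w])
    show "integrable lborel w" unfolding w_def using expabs_integrable[OF b]
      by (intro integrable_mult_right) auto
    show "AE t in lborel. (\<lambda>n. laplace_density b x (X n + t *\<^sub>R onev)) \<longlonglongrightarrow> laplace_density b x (y + t *\<^sub>R onev)"
    proof (intro AE_I2)
      fix t
      have "(\<lambda>n. X n + t *\<^sub>R onev) \<longlonglongrightarrow> y + t *\<^sub>R onev" using X by (intro tendsto_intros)
      then show "(\<lambda>n. laplace_density b x (X n + t *\<^sub>R onev)) \<longlonglongrightarrow> laplace_density b x (y + t *\<^sub>R onev)"
        using cont_lap[of b x] by (intro isCont_tendsto_compose[where g = "laplace_density b x"])
          (auto simp: continuous_on_eq_continuous_at)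
    qed
    fix n
    show "AE t in lborel. norm (laplace_density b x (X n + t *\<^sub>R onev)) \<le> w t"
    proof (intro AE_I2)
      fix t
      have p: "0 < lapB b TYPE('n)" by (rule lapB_pos[OF b])
      have "laplace_density b x (X n + t *\<^sub>R onev) \<le> lapB b TYPE('n) * exp (- \<bar>(X n + t *\<^sub>R onev) $ i - x $ i\<bar> / b)"
        by (rule lap_bound[OF b])
      also have "exp (- \<bar>(X n + t *\<^sub>R onev) $ i - x $ i\<bar> / b) \<le> exp (R / b) * exp (- \<bar>(y $ i - x $ i) + t\<bar> / b)"
      proof -
        have "- \<bar>(X n + t *\<^sub>R onev) $ i - x $ i\<bar> / b \<le> R / b + - \<bar>(y $ i - x $ i) + t\<bar> / b"
          using Ri[of n] b by (simp add: onev_def divide_simps)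
        then show ?thesis by (simp add: exp_add[symmetric])
      qed
      finally show "norm (laplace_density b x (X n + t *\<^sub>R onev)) \<le> w t"
        using p lap_nonneg[OF b, of x "X n + t *\<^sub>R onev"] unfolding w_def
        by (simp add: mult.assoc mult_left_mono)
    qed
  qed measurable
  then show "(Fd b x \<circ> X) \<longlonglongrightarrow> Fd b x y"
    unfolding Fd_def comp_def by (intro tendsto_intros)
qed

lemma Fd_cont: "b > 0 \<Longrightarrow> continuous_on UNIV (Fd b x)"
  by (intro continuous_at_imp_continuous_on ballI Fd_isCont)

lemma Fd_meas[measurable]: "b > 0 \<Longrightarrow> Fd b x \<in> borel_measurable borel"
  by (rule borel_measurable_continuous_onI[OF Fd_cont])


definition slab :: "real \<Rightarrow> (real^'n) set" where
  "slab C = {z. C \<le> (\<Sum>i\<in>UNIV. z $ i) \<and> (\<Sum>i\<in>UNIV. z $ i) \<le> C + sqrt (real CARD('n))}"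

lemma slab_borel[measurable]: "slab C \<in> sets (borel :: (real^'n) measure)"
proof -
  have "closed (slab C :: (real^'n) set)" unfolding slab_def
    by (intro closed_Collect_conj closed_Collect_le continuous_intros)
  then show ?thesis by (rule borel_closed)
qed

lemma pair_lborel: "pair_sigma_finite (lborel::('a::euclidean_space) measure) (lborel::('b::euclidean_space) measure)"
  by (simp add: pair_sigma_finite_def sigma_finite_lborel)

lemma slab_line:
  fixes z :: "real^'n"
  shows "(\<integral>\<^sup>+t. indicator (slab C) (z - t *\<^sub>R onev) \<partial>lborel) = ennreal (1 / sqrt (real CARD('n)))"
proof -
  define s where "s = (\<Sum>i\<in>UNIV. z $ i)"
  define N where "N = real CARD('n)"
  have N: "N > 0" unfolding N_def by simp
  have "indicator (slab C) (z - t *\<^sub>R onev) = (indicator {(s - C - sqrt N)/N .. (s - C)/N} t :: ennreal)" for t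
  proof -
    have "(\<Sum>i\<in>UNIV. (z - t *\<^sub>R onev) $ i) = s - N * t"
      using sum_plus_onev[of z "-t"] unfolding s_def N_def by simp
    then show ?thesis using N unfolding slab_def N_def[symmetric]
      by (auto simp: indicator_def field_simps)
  qed
  then have "(\<integral>\<^sup>+t. indicator (slab C) (z - t *\<^sub>R onev) \<partial>lborel) =
      emeasure lborel {(s - C - sqrt N)/N .. (s - C)/N}"
    by (simp add: nn_integral_indicator)
  also have "\<dots> = ennreal ((s - C)/N - (s - C - sqrt N)/N)"
    using N by (subst emeasure_lborel_Icc) (auto simp: divide_right_mono)
  also have "(s - C)/N - (s - C - sqrt N)/N = 1 / sqrt N"
    using N by (simp add: field_simps)
  finally show ?thesis unfolding N_def .
qed

lemma Fd_shift:
  fixes x y :: "real^'n"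
  shows "Fd b x (y + s *\<^sub>R onev) = Fd b x y"
proof -
  have "(\<integral>t. laplace_density b x (y + t *\<^sub>R onev) \<partial>lborel) =
      \<bar>1\<bar> *\<^sub>R (\<integral>t. laplace_density b x (y + (s + 1 * t) *\<^sub>R onev) \<partial>lborel)"
    by (rule lborel_integral_real_affine) simp
  then show ?thesis unfolding Fd_def by (simp add: scaleR_add_left add.assoc)
qed

lemma Fd_proj:
  fixes x w :: "real^'n"
  shows "Fd b x (proj_S C w) = Fd b x w"
  using Fd_shift[of b x "proj_S C w"] proj_decomp[of w C] by metis


lemma main_id:
  fixes x :: "real^'n" and G :: "real^'n \<Rightarrow> ennreal"
  assumes b: "b > 0" and Gm[measurable]: "G \<in> borel_measurable borel"
    and Gi: "\<And>z t. G (z + t *\<^sub>R onev) = G z"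
  shows "(\<integral>\<^sup>+z. G z * ennreal (laplace_density b x z) \<partial>lborel) =
         (\<integral>\<^sup>+z. G z * indicator (slab C) z * ennreal (Fd b x (proj_S C z)) \<partial>lborel)"
proof -
  define c where "c = ennreal (sqrt (real CARD('n)))"
  define p where "p = laplace_density b x"
  have pm[measurable]: "p \<in> borel_measurable borel" unfolding p_def by measurable
  interpret PF: pair_sigma_finite "lborel :: (real^'n) measure" "lborel :: real measure"
    by (rule pair_lborel)
  have c1: "c * ennreal (1 / sqrt (real CARD('n))) = 1"
    unfolding c_def by (simp add: ennreal_mult[symmetric] del: ennreal_mult)
  have "(\<integral>\<^sup>+z. G z * ennreal (p z) \<partial>lborel) =
      (\<integral>\<^sup>+z. (\<integral>\<^sup>+t. c * (G z * ennreal (p z) * indicator (slab C) (z - t *\<^sub>R onev)) \<partial>lborel) \<partial>lborel)"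
  proof (intro nn_integral_cong)
    fix z :: "real^'n"
    have "(\<integral>\<^sup>+t. c * (G z * ennreal (p z) * indicator (slab C) (z - t *\<^sub>R onev)) \<partial>lborel) =
        c * (G z * ennreal (p z) * (\<integral>\<^sup>+t. indicator (slab C) (z - t *\<^sub>R onev) \<partial>lborel))"
      by (subst nn_integral_cmult, measurable, subst nn_integral_cmult, measurable)
    also have "\<dots> = G z * ennreal (p z) * (c * ennreal (1 / sqrt (real CARD('n))))"
      by (simp add: slab_line mult_ac)
    also have "\<dots> = G z * ennreal (p z)" using c1 by simp
    finally show "G z * ennreal (p z) = (\<integral>\<^sup>+t. c * (G z * ennreal (p z) * indicator (slab C) (z - t *\<^sub>R onev)) \<partial>lborel)" by simp
  qed
  also have "\<dots> = (\<integral>\<^sup>+t. (\<integral>\<^sup>+z. c * (G z * ennreal (p z) * indicator (slab C) (z - t *\<^sub>R onev)) \<partial>lborel) \<partial>lborel)"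
    by (rule pair_sigma_finite.Fubini'[OF pair_lborel, symmetric]) measurable
  also have "\<dots> = (\<integral>\<^sup>+t. (\<integral>\<^sup>+w. c * (G w * ennreal (p (w + t *\<^sub>R onev)) * indicator (slab C) w) \<partial>lborel) \<partial>lborel)"
  proof (rule nn_integral_cong)
    fix t :: real
    have "(\<integral>\<^sup>+z. c * (G z * ennreal (p z) * indicator (slab C) (z - t *\<^sub>R onev)) \<partial>lborel) =
        (\<integral>\<^sup>+z. c * (G z * ennreal (p z) * indicator (slab C) (z - t *\<^sub>R onev)) \<partial>distr lborel borel ((+) (t *\<^sub>R onev)))"
      by (simp add: lborel_distr_plus)
    also have "\<dots> = (\<integral>\<^sup>+w. c * (G (t *\<^sub>R onev + w) * ennreal (p (t *\<^sub>R onev + w)) * indicator (slab C) (t *\<^sub>R onev + w - t *\<^sub>R onev)) \<partial>lborel)"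
      by (rule nn_integral_distr) measurable
    also have "\<dots> = (\<integral>\<^sup>+w. c * (G w * ennreal (p (w + t *\<^sub>R onev)) * indicator (slab C) w) \<partial>lborel)"
      using Gi by (simp add: add.commute)
    finally show "(\<integral>\<^sup>+z. c * (G z * ennreal (p z) * indicator (slab C) (z - t *\<^sub>R onev)) \<partial>lborel) =
        (\<integral>\<^sup>+w. c * (G w * ennreal (p (w + t *\<^sub>R onev)) * indicator (slab C) w) \<partial>lborel)" .
  qed
  also have "\<dots> = (\<integral>\<^sup>+w. (\<integral>\<^sup>+t. c * (G w * ennreal (p (w + t *\<^sub>R onev)) * indicator (slab C) w) \<partial>lborel) \<partial>lborel)"
    by (rule pair_sigma_finite.Fubini'[OF pair_lborel]) measurable
  also have "\<dots> = (\<integral>\<^sup>+w. G w * indicator (slab C) w * ennreal (Fd b x (proj_S C w)) \<partial>lborel)"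
  proof (intro nn_integral_cong)
    fix w :: "real^'n"
    have "(\<integral>\<^sup>+t. c * (G w * ennreal (p (w + t *\<^sub>R onev)) * indicator (slab C) w) \<partial>lborel) =
        (\<integral>\<^sup>+t. (G w * indicator (slab C) w * c) * ennreal (p (w + t *\<^sub>R onev)) \<partial>lborel)"
      by (simp add: mult_ac)
    also have "\<dots> = (G w * indicator (slab C) w) * (c * (\<integral>\<^sup>+t. ennreal (p (w + t *\<^sub>R onev)) \<partial>lborel))"
      by (subst nn_integral_cmult) (measurable, simp add: mult_ac)
    also have "\<dots> = G w * indicator (slab C) w * ennreal (Fd b x (proj_S C w))"
      unfolding Fd_proj c_def p_def Fd_nn[OF b] ..
    finally show "(\<integral>\<^sup>+t. c * (G w * ennreal (p (w + t *\<^sub>R onev)) * indicator (slab C) w) \<partial>lborel) =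
        G w * indicator (slab C) w * ennreal (Fd b x (proj_S C w))" .
  qed
  finally show ?thesis unfolding p_def .
qed


lemma hyp_slab: "hyperplane_measure C = distr (restrict_space lborel (slab C)) borel (proj_S C)"
  unfolding hyperplane_measure_def slab_def ..

lemma emeasure_H_density:
  fixes f :: "real^'n \<Rightarrow> real"
  assumes [measurable]: "f \<in> borel_measurable borel" and A[measurable]: "A \<in> sets borel"
  shows "emeasure (density (hyperplane_measure C) (\<lambda>y. ennreal (f y))) A =
    (\<integral>\<^sup>+z. ennreal (f (proj_S C z)) * indicator A (proj_S C z) * indicator (slab C) z \<partial>lborel)"
proof -
  have "emeasure (density (hyperplane_measure C) (\<lambda>y. ennreal (f y))) A =
      (\<integral>\<^sup>+y. ennreal (f y) * indicator A y \<partial>hyperplane_measure C)"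
    by (rule emeasure_density) (auto simp: hyp_slab)
  also have "\<dots> = (\<integral>\<^sup>+z. ennreal (f (proj_S C z)) * indicator A (proj_S C z) \<partial>restrict_space lborel (slab C))"
    unfolding hyp_slab by (rule nn_integral_distr) (auto intro: measurable_restrict_space1)
  also have "\<dots> = (\<integral>\<^sup>+z. ennreal (f (proj_S C z)) * indicator A (proj_S C z) * indicator (slab C) z \<partial>lborel)"
    by (rule nn_integral_restrict_space) auto
  finally show ?thesis .
qed

lemma density_ok:
  fixes x :: "real^'n" assumes b: "b > 0"
  shows "is_proj_density C b x (Fd b x)"
  unfolding is_proj_density_def
proof (intro conjI allI Fd_meas b Fd_nonneg)
  show "distr (noisy_law b x) borel (proj_S C) = density (hyperplane_measure C) (\<lambda>y. ennreal (Fd b x y))"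
  proof (rule measure_eqI)
    show "sets (distr (noisy_law b x) borel (proj_S C)) = sets (density (hyperplane_measure C) (\<lambda>y. ennreal (Fd b x y)))"
      by (simp add: hyp_slab)
    fix A assume "A \<in> sets (distr (noisy_law b x) borel (proj_S C))"
    then have A[measurable]: "A \<in> sets borel" by simp
    have "emeasure (distr (noisy_law b x) borel (proj_S C)) A = emeasure (noisy_law b x) (proj_S C -` A \<inter> space (noisy_law b x))"
      by (rule emeasure_distr) (auto simp: noisy_law_def)
    also have "\<dots> = (\<integral>\<^sup>+z. ennreal (laplace_density b x z) * indicator (proj_S C -` A) z \<partial>lborel)"
      unfolding noisy_law_def using measurable_sets[OF meas_proj A, of C] by (subst emeasure_density) auto
    also have "\<dots> = (\<integral>\<^sup>+z. indicator A (proj_S C z) * ennreal (laplace_density b x z) \<partial>lborel)"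
      by (intro nn_integral_cong) (simp add: indicator_def)
    also have "\<dots> = (\<integral>\<^sup>+z. indicator A (proj_S C z) * indicator (slab C) z * ennreal (Fd b x (proj_S C z)) \<partial>lborel)"
      by (rule main_id[OF b]) (auto simp: proj_shift)
    also have "\<dots> = emeasure (density (hyperplane_measure C) (\<lambda>y. ennreal (Fd b x y))) A"
      by (subst emeasure_H_density[OF Fd_meas[OF b] A]) (simp add: mult_ac)
    finally show "emeasure (distr (noisy_law b x) borel (proj_S C)) A = emeasure (density (hyperplane_measure C) (\<lambda>y. ennreal (Fd b x y))) A" .
  qed
qed


lemma K_closed: "closed (K_S C :: (real^'n) set)"
  unfolding K_S_def by (intro closed_Collect_eq continuous_intros)

lemma H_emeasure:
  fixes U :: "(real^'n) set" assumes [measurable]: "U \<in> sets borel"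
  shows "emeasure (hyperplane_measure C) U = emeasure lborel (proj_S C -` U \<inter> slab C)"
proof -
  have "emeasure (hyperplane_measure C) U = emeasure (restrict_space lborel (slab C)) (proj_S C -` U \<inter> space (restrict_space lborel (slab C)))"
    unfolding hyp_slab by (rule emeasure_distr) (auto intro: measurable_restrict_space1)
  also have "\<dots> = emeasure lborel (proj_S C -` U \<inter> slab C)"
    by (subst emeasure_restrict_space) (auto simp: space_restrict_space)
  finally show ?thesis .
qed

lemma H_pos:
  fixes y0 :: "real^'n" assumes y0: "y0 \<in> K_S C" and r: "r > 0"
  shows "emeasure (hyperplane_measure C) (K_S C \<inter> ball y0 r) > 0"
proof -
  define N where "N = real CARD('n)"
  have N: "N > 0" unfolding N_def by simp
  have Um[measurable]: "K_S C \<inter> ball y0 r \<in> sets borel"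
    using K_closed by (intro sets.Int borel_closed borel_open) auto
  define V where "V = {z::real^'n. C < (\<Sum>i\<in>UNIV. z $ i) \<and> (\<Sum>i\<in>UNIV. z $ i) < C + sqrt N} \<inter> proj_S C -` ball y0 r"
  have "open V" unfolding V_def
    by (intro open_Int open_Collect_conj open_Collect_less continuous_intros continuous_open_vimage open_ball)
       (auto intro: cont_proj)
  define z0 where "z0 = y0 + (sqrt N / (2 * N)) *\<^sub>R onev"
  have "(\<Sum>i\<in>UNIV. z0 $ i) = C + sqrt N / 2"
    using y0 N unfolding z0_def sum_plus_onev N_def[symmetric] K_S_def by simp
  moreover have "proj_S C z0 = y0" unfolding z0_def proj_shift proj_K[OF y0] ..
  ultimately have "z0 \<in> V" using N r unfolding V_def by simp
  from open_contains_box[OF \<open>open V\<close> this] obtain a b where ab: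
    "box a b \<subseteq> V" "z0 \<in> box a b" "\<forall>i\<in>Basis. a \<bullet> i < b \<bullet> i" by blast
  have "0 < emeasure lborel (box a b)"
    using ab(3) unfolding emeasure_lborel_box_eq
    by (auto intro!: prod_pos simp: algebra_simps less_imp_le)
  also have "\<dots> \<le> emeasure lborel (proj_S C -` (K_S C \<inter> ball y0 r) \<inter> slab C)"
  proof (rule emeasure_mono)
    show "box a b \<subseteq> proj_S C -` (K_S C \<inter> ball y0 r) \<inter> slab C"
      using ab(1) proj_in_K unfolding V_def slab_def N_def by fastforce
    show "proj_S C -` (K_S C \<inter> ball y0 r) \<inter> slab C \<in> sets lborel"
      using measurable_sets[OF meas_proj Um, of C] by simp
  qed
  finally show ?thesis by (subst H_emeasure) auto
qed


lemma dens_fin: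
  fixes x y0 :: "real^'n" assumes b: "b > 0"
  shows "emeasure (density (hyperplane_measure C) (\<lambda>y. ennreal (Fd b x y))) (K_S C \<inter> ball y0 1) < \<infinity>"
proof -
  define N where "N = real CARD('n)"
  have N: "N \<ge> 1" unfolding N_def by (simp add: Suc_leI)
  define M where "M = sqrt (real CARD('n)) * (lapB b TYPE('n) * (\<integral>t. exp (- \<bar>t\<bar> / b) \<partial>lborel))"
  define R where "R = norm y0 + 1 + sqrt N * norm (onev :: real^'n)"
  have Um[measurable]: "K_S C \<inter> ball y0 1 \<in> sets borel"
    using K_closed by (intro sets.Int borel_closed borel_open) auto
  have "emeasure (density (hyperplane_measure C) (\<lambda>y. ennreal (Fd b x y))) (K_S C \<inter> ball y0 1) =
      (\<integral>\<^sup>+z. ennreal (Fd b x (proj_S C z)) * indicator (K_S C \<inter> ball y0 1) (proj_S C z) * indicator (slab C) z \<partial>lborel)"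
    by (rule emeasure_H_density[OF Fd_meas[OF b] Um])
  also have "\<dots> \<le> (\<integral>\<^sup>+z. ennreal M * indicator (cball 0 R) (z::real^'n) \<partial>lborel)"
  proof (rule nn_integral_mono)
    fix z :: "real^'n"
    show "ennreal (Fd b x (proj_S C z)) * indicator (K_S C \<inter> ball y0 1) (proj_S C z) * indicator (slab C) z
        \<le> ennreal M * indicator (cball 0 R) z"
    proof (cases "proj_S C z \<in> ball y0 1 \<and> z \<in> slab C")
      case True
      define s where "s = ((\<Sum>i\<in>UNIV. z $ i) - C) / N"
      have s: "0 \<le> s" "s \<le> sqrt N / N" using True N unfolding s_def slab_def N_def[symmetric]
        by (auto simp: divide_right_mono)
      have "sqrt N / N \<le> sqrt N" using N by (simp add: divide_le_eq mult_le_cancel_left1 real_sqrt_ge_one)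
      with s have s2: "\<bar>s\<bar> \<le> sqrt N" by simp
      have "norm z \<le> norm (proj_S C z) + norm (s *\<^sub>R (onev :: real^'n))"
        using proj_decomp[of z C] norm_triangle_ineq[of "proj_S C z" "s *\<^sub>R onev"] unfolding s_def N_def by simp
      also have "norm (proj_S C z) \<le> norm y0 + 1"
        using True norm_triangle_ineq2[of "proj_S C z" y0] by (auto simp: dist_norm norm_minus_commute)
      also have "norm (s *\<^sub>R (onev :: real^'n)) \<le> sqrt N * norm (onev :: real^'n)"
        using s2 by (simp add: mult_right_mono)
      finally have "z \<in> cball 0 R" unfolding R_def by simp
      moreover have "Fd b x (proj_S C z) \<le> M" unfolding M_def by (rule Fd_bound[OF b])
      ultimately show ?thesis using True
        by (auto simp: indicator_def intro: ennreal_leI)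
    qed (auto simp: indicator_def)
  qed
  also have "\<dots> = ennreal M * emeasure lborel (cball (0::real^'n) R)"
    by (subst nn_integral_cmult) (auto intro: borel_measurable_indicator borel_closed)
  also have "\<dots> < \<infinity>"
    using emeasure_lborel_cball_finite[of "0::real^'n" R] by (simp add: ennreal_mult_less_top)
  finally show ?thesis .
qed


lemma uniq_aux:
  fixes g1 g2 :: "real^'n \<Rightarrow> real" and y0 :: "real^'n"
  assumes m1[measurable]: "g1 \<in> borel_measurable borel" and m2[measurable]: "g2 \<in> borel_measurable borel"
    and n1: "\<And>y. 0 \<le> g1 y"
    and c1: "continuous_on (K_S C) g1" and c2: "continuous_on (K_S C) g2"
    and y0: "y0 \<in> K_S C" and lt: "g1 y0 < g2 y0"
    and eq: "density (hyperplane_measure C) (\<lambda>y. ennreal (g1 y)) = density (hyperplane_measure C) (\<lambda>y. ennreal (g2 y))"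
    and fin: "emeasure (density (hyperplane_measure C) (\<lambda>y. ennreal (g1 y))) (K_S C \<inter> ball y0 1) < \<infinity>"
  shows False
proof -
  define h where "h = (\<lambda>y. g2 y - g1 y)"
  have ch: "continuous_on (K_S C) h" unfolding h_def using c1 c2 by (intro continuous_intros)
  define e where "e = (g2 y0 - g1 y0) / 2"
  have e: "e > 0" using lt unfolding e_def by simp
  obtain d where d: "d > 0" "\<And>y. y \<in> K_S C \<Longrightarrow> dist y y0 < d \<Longrightarrow> dist (h y) (h y0) < e"
    using ch y0 e unfolding continuous_on_iff by metis
  define r where "r = min d 1"
  have r: "r > 0" using d unfolding r_def by simp
  define U where "U = K_S C \<inter> ball y0 r"
  have Um[measurable]: "U \<in> sets borel"
    unfolding U_def using K_closed by (intro sets.Int borel_closed borel_open) auto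
  have gU: "g1 y + e \<le> g2 y" if "y \<in> U" for y
  proof -
    have "dist (h y) (h y0) < e" using that d(2)[of y] unfolding U_def r_def by (auto simp: dist_commute)
    then have "h y0 - h y < e" using abs_ge_minus_self[of "h y - h y0"] unfolding dist_real_def by linarith
    then show ?thesis unfolding h_def e_def by (simp add: field_simps)
  qed
  have sH: "sets (hyperplane_measure C) = sets borel" by (simp add: hyp_slab)
  have hm: "\<And>N. measurable (hyperplane_measure C) N = measurable borel N"
    by (rule measurable_cong_sets[OF sH refl])
  define E1 where "E1 = emeasure (density (hyperplane_measure C) (\<lambda>y. ennreal (g1 y))) U"
  have E1fin: "E1 < \<infinity>"
  proof -
    have [measurable]: "K_S C \<inter> ball y0 1 \<in> sets borel"
      using K_closed by (intro sets.Int borel_closed borel_open) auto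
    have "E1 \<le> emeasure (density (hyperplane_measure C) (\<lambda>y. ennreal (g1 y))) (K_S C \<inter> ball y0 1)"
      unfolding E1_def U_def r_def using K_closed
      by (intro emeasure_mono) (auto simp: sH hm)
    with fin show ?thesis by simp
  qed
  have E1d: "E1 = (\<integral>\<^sup>+y. ennreal (g1 y) * indicator U y \<partial>hyperplane_measure C)"
    unfolding E1_def by (rule emeasure_density) (auto simp: sH hm)
  have E2: "E1 = (\<integral>\<^sup>+y. ennreal (g2 y) * indicator U y \<partial>hyperplane_measure C)"
    unfolding E1_def eq by (rule emeasure_density) (auto simp: sH hm)
  have "(\<integral>\<^sup>+y. ennreal (g1 y) * indicator U y + ennreal e * indicator U y \<partial>hyperplane_measure C)
      \<le> (\<integral>\<^sup>+y. ennreal (g2 y) * indicator U y \<partial>hyperplane_measure C)"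
  proof (rule nn_integral_mono)
    fix y show "ennreal (g1 y) * indicator U y + ennreal e * indicator U y \<le> ennreal (g2 y) * indicator U y"
      using gU[of y] n1[of y] e by (auto simp: indicator_def ennreal_plus[symmetric] simp del: ennreal_plus intro: ennreal_leI)
  qed
  also have "\<dots> = E1" using E2 by simp
  also have "(\<integral>\<^sup>+y. ennreal (g1 y) * indicator U y + ennreal e * indicator U y \<partial>hyperplane_measure C)
      = E1 + ennreal e * emeasure (hyperplane_measure C) U"
    unfolding E1d by (subst nn_integral_add) (auto simp: sH hm nn_integral_cmult_indicator)
  finally have "E1 + ennreal e * emeasure (hyperplane_measure C) U \<le> E1 + 0" by simp
  then have "ennreal e * emeasure (hyperplane_measure C) U = 0"
    using E1fin by (subst (asm) ennreal_add_left_cancel_le) auto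
  with e have "emeasure (hyperplane_measure C) U = 0" by simp
  with H_pos[OF y0 r] show False unfolding U_def by simp
qed


lemma sum3: fixes g :: "'n::finite \<Rightarrow> real" assumes "i \<noteq> j"
  shows "(\<Sum>k\<in>UNIV. g k) = g i + g j + (\<Sum>k\<in>UNIV - {i} - {j}. g k)"
  using assms by (subst sum.remove[of UNIV i], simp, simp, subst sum.remove[of "UNIV - {i}" j]) auto

lemma prod3: fixes g :: "'n::finite \<Rightarrow> real" assumes "i \<noteq> j"
  shows "(\<Prod>k\<in>UNIV. g k) = g i * g j * (\<Prod>k\<in>UNIV - {i} - {j}. g k)"
  using assms by (subst prod.remove[of UNIV i], simp, simp, subst prod.remove[of "UNIV - {i}" j]) auto

lemma sw_nth: "sw i j y $ k = (if k = i then y $ j else if k = j then y $ i else y $ k)"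
  by (simp add: sw_def)

lemma sw_K: fixes y :: "real^'n" assumes "y \<in> K_S C" shows "sw i j y \<in> K_S C"
proof (cases "i = j")
  case True
  then have "sw i j y = y" by (simp add: vec_eq_iff sw_nth)
  then show ?thesis using assms by simp
next
  case False
  have "(\<Sum>k\<in>UNIV. sw i j y $ k) = (\<Sum>k\<in>UNIV. y $ k)"
    using False by (simp add: sum3[OF False] sw_nth)
  then show ?thesis using assms by (simp add: K_S_def)
qed

lemma sw_shift: "sw i j (y + t *\<^sub>R onev) = sw i j y + t *\<^sub>R onev"
  by (simp add: vec_eq_iff sw_nth onev_def)

lemma lap_swap:
  fixes x u :: "real^'n" assumes b: "b > 0" and xi: "x $ i \<le> x $ j" and ui: "u $ i \<le> u $ j"
  shows "laplace_density b x (sw i j u) \<le> laplace_density b x u"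
proof (cases "i = j")
  case True
  then have "sw i j u = u" by (simp add: vec_eq_iff sw_nth)
  then show ?thesis by simp
next
  case False
  define R where "R = (\<Prod>k\<in>UNIV - {i} - {j}. exp (- \<bar>u $ k - x $ k\<bar> / b) / (2 * b))"
  have R: "(\<Prod>k\<in>UNIV - {i} - {j}. exp (- \<bar>sw i j u $ k - x $ k\<bar> / b) / (2 * b)) = R"
    unfolding R_def by (intro prod.cong) (auto simp: sw_nth)
  have R0: "R \<ge> 0" unfolding R_def using b by (intro prod_nonneg) auto
  have key: "\<bar>u $ i - x $ i\<bar> + \<bar>u $ j - x $ j\<bar> \<le> \<bar>u $ j - x $ i\<bar> + \<bar>u $ i - x $ j\<bar>"
    using xi ui by (auto simp: abs_if)
  have "exp (- \<bar>u $ j - x $ i\<bar> / b) * exp (- \<bar>u $ i - x $ j\<bar> / b) \<le>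
        exp (- \<bar>u $ i - x $ i\<bar> / b) * exp (- \<bar>u $ j - x $ j\<bar> / b)"
    unfolding exp_add[symmetric] using key b by (simp add: divide_simps)
  then have "exp (- \<bar>u $ j - x $ i\<bar> / b) / (2 * b) * (exp (- \<bar>u $ i - x $ j\<bar> / b) / (2 * b)) * R \<le>
        exp (- \<bar>u $ i - x $ i\<bar> / b) / (2 * b) * (exp (- \<bar>u $ j - x $ j\<bar> / b) / (2 * b)) * R"
    using b R0 by (intro mult_right_mono) (auto simp: divide_simps)
  then show ?thesis
    unfolding laplace_density_def prod3[OF False] R using False by (simp add: sw_nth R_def)
qed

lemma Fd_swap:
  fixes x y :: "real^'n" assumes b: "b > 0" and xi: "x $ i \<le> x $ j" and yi: "y $ i \<le> y $ j"
  shows "Fd b x (sw i j y) \<le> Fd b x y"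
  unfolding Fd_def
proof (intro mult_left_mono integral_mono lap_line_integrable b)
  fix t
  show "laplace_density b x (sw i j y + t *\<^sub>R onev) \<le> laplace_density b x (y + t *\<^sub>R onev)"
    unfolding sw_shift[symmetric] using yi by (intro lap_swap b xi) (simp add: onev_def)
qed simp


theorem lemma10:
  fixes C b :: real and x :: "real ^ 'n"
  assumes "CARD('n) \<ge> 2" and "C > 0" and "b > 0" and "x \<in> K_S C"
  shows "(\<exists>f. is_proj_density C b x f \<and> continuous_on (K_S C) f) \<and>
         (\<forall>f. is_proj_density C b x f \<and> continuous_on (K_S C) f \<longrightarrow>
            (\<forall>i j y. y \<in> K_S C \<and> x $ i \<le> x $ j \<and> y $ i \<le> y $ j \<longrightarrow> f y \<ge> f (sw i j y)))"
proof (intro conjI allI impI)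
  have b: "b > 0" by fact
  have cF: "continuous_on (K_S C) (Fd b x)" by (rule continuous_on_subset[OF Fd_cont[OF b]]) simp
  show "\<exists>f. is_proj_density C b x f \<and> continuous_on (K_S C) f"
    using density_ok[OF b] cF by blast
  fix f :: "real^'n \<Rightarrow> real" and i j :: 'n and y :: "real^'n"
  assume f: "is_proj_density C b x f \<and> continuous_on (K_S C) f"
    and y: "y \<in> K_S C \<and> x $ i \<le> x $ j \<and> y $ i \<le> y $ j"
  have fm[measurable]: "f \<in> borel_measurable borel" and fn: "\<And>y. 0 \<le> f y"
    and fd: "distr (noisy_law b x) borel (proj_S C) = density (hyperplane_measure C) (\<lambda>y. ennreal (f y))"
    and fc: "continuous_on (K_S C) f"
    using f unfolding is_proj_density_def by auto
  have Fdd: "distr (noisy_law b x) borel (proj_S C) = density (hyperplane_measure C) (\<lambda>y. ennreal (Fd b x y))"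
    using density_ok[OF b] unfolding is_proj_density_def by auto
  have deq: "density (hyperplane_measure C) (\<lambda>y. ennreal (f y)) = density (hyperplane_measure C) (\<lambda>y. ennreal (Fd b x y))"
    using fd Fdd by simp
  have eqK: "f z = Fd b x z" if z: "z \<in> K_S C" for z
  proof (rule ccontr)
    assume "f z \<noteq> Fd b x z"
    then consider "f z < Fd b x z" | "Fd b x z < f z" by linarith
    then show False
    proof cases
      case 1
      show False
        by (rule uniq_aux[OF fm Fd_meas[OF b] fn fc cF z 1 deq])
           (use dens_fin[OF b] deq in simp)
    next
      case 2
      show False
        by (rule uniq_aux[OF Fd_meas[OF b] fm Fd_nonneg[OF b] cF fc z 2 deq[symmetric] dens_fin[OF b]])
    qed
  qed
  have "f (sw i j y) = Fd b x (sw i j y)" using y by (intro eqK sw_K) auto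
  also have "\<dots> \<le> Fd b x y" using y by (intro Fd_swap b) auto
  also have "\<dots> = f y" using y eqK by auto
  finally show "f (sw i j y) \<le> f y" .
qed


end
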